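(* A norm $\|\cdot\|$ on $\mathbb{R}^2$ is an $F$-norm if and only if (i) it is radially symmetric, i.e. $\|(x_0,x_1)\|=\|(|x_0|,|x_1|)\|$, and (ii) the Lebesgue derivative of $t\mapsto\|(t,1)\|$ on $[0,\infty)$ is almost everywhere equal to a univariate distribution function $F$ on $[0,\infty)$ with finite first moment equal to $\|(0,1)\|$. In that case $\|\cdot\|=\|\cdot\|_F$.
   Context: For a random variable $X\ge0$ a.s. with $0<E(X)<\infty$ and distribution function $F$, $\|(x_0,x_1)\|_F=E(\max(|x_0|,|x_1|X))$; an $F$-norm on $\mathbb{R}^2$ is any norm of this form. *)

theory Defs
  imports "HOL-Probability.Probability"
begin

definition is_norm_R2 :: "(real \<times> real \<Rightarrow> real) \<Rightarrow> bool" where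
  "is_norm_R2 N \<longleftrightarrow>
     (\<forall>x. 0 \<le> N x) \<and> (\<forall>x. N x = 0 \<longleftrightarrow> x = (0, 0)) \<and>
     (\<forall>c a b. N (c * a, c * b) = \<bar>c\<bar> * N (a, b)) \<and>
     (\<forall>x y. N (fst x + fst y, snd x + snd y) \<le> N x + N y)"

definition admissible_law :: "real measure \<Rightarrow> bool" where
  "admissible_law M \<longleftrightarrow> real_distribution M \<and> (AE \<xi> in M. 0 \<le> \<xi>) \<and>
     integrable M (\<lambda>\<xi>. \<xi>) \<and> 0 < (\<integral>\<xi>. \<xi> \<partial>M)"

text \<open>The F-norm ||(x0,x1)||_F = E max(|x0|, |x1| X), where F = cdf M is the law of X.\<close>
definition F_norm :: "real measure \<Rightarrow> real \<times> real \<Rightarrow> real" where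
  "F_norm M x = (\<integral>\<xi>. max \<bar>fst x\<bar> (\<bar>snd x\<bar> * \<xi>) \<partial>M)"

definition is_F_norm :: "(real \<times> real \<Rightarrow> real) \<Rightarrow> bool" where
  "is_F_norm N \<longleftrightarrow> (\<exists>M. admissible_law M \<and> N = F_norm M)"

definition radially_symmetric :: "(real \<times> real \<Rightarrow> real) \<Rightarrow> bool" where
  "radially_symmetric N \<longleftrightarrow> (\<forall>x0 x1. N (x0, x1) = N (\<bar>x0\<bar>, \<bar>x1\<bar>))"

definition derivative_condition :: "(real \<times> real \<Rightarrow> real) \<Rightarrow> real measure \<Rightarrow> bool" where
  "derivative_condition N M \<longleftrightarrow>
     real_distribution M \<and> (AE \<xi> in M. 0 \<le> \<xi>) \<and> integrable M (\<lambda>\<xi>. \<xi>) \<and>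
     (\<integral>\<xi>. \<xi> \<partial>M) = N (0, 1) \<and>
     (AE t in lborel. 0 < t \<longrightarrow> ((\<lambda>s. N (s, 1)) has_real_derivative cdf M t) (at t))"

end

theory Submission
  imports Defs
begin

lemma g_integrable:
  assumes "real_distribution M" "integrable M (\<lambda>\<xi>. \<xi>)"
  shows "integrable M (\<lambda>\<xi>. max a (b * \<xi>))"
proof -
  interpret real_distribution M by fact
  show ?thesis using assms(2) by (intro integrable_max) auto
qed

lemma g_bounds:
  assumes "real_distribution M" "integrable M (\<lambda>\<xi>. \<xi>)" "0 \<le> t" "t \<le> s"
  shows "cdf M t * (s - t) \<le> F_norm M (s,1) - F_norm M (t,1)"
    and "F_norm M (s,1) - F_norm M (t,1) \<le> cdf M s * (s - t)"
proof -
  interpret real_distribution M by fact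
  have I: "\<And>a. integrable M (\<lambda>\<xi>. max a \<xi>)" using g_integrable[OF assms(1,2), of _ 1] by simp
  have eq: "F_norm M (s,1) - F_norm M (t,1) = (\<integral>\<xi>. max s \<xi> - max t \<xi> \<partial>M)"
    using assms(3,4) by (simp add: F_norm_def Bochner_Integration.integral_diff[OF I I])
  have Ii: "\<And>a. integrable M (\<lambda>\<xi>. (s - t) * indicator {..a} \<xi> :: real)"
    by (intro integrable_mult_right integrable_real_indicator) (auto simp: less_top[symmetric])
  have Id: "integrable M (\<lambda>\<xi>. max s \<xi> - max t \<xi>)" by (intro Bochner_Integration.integrable_diff I)
  have c: "cdf M a * (s - t) = (\<integral>\<xi>. (s - t) * indicator {..a} \<xi> \<partial>M)" for a
  proof -
    have "(\<integral>\<xi>. (s - t) * indicator {..a} \<xi> \<partial>M) = (s - t) * (\<integral>\<xi>. indicator {..a} \<xi> \<partial>M)"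
      by (rule integral_mult_right_zero)
    also have "(\<integral>\<xi>. indicator {..a} \<xi> \<partial>M) = cdf M a"
      unfolding cdf_def by simp
    finally show ?thesis by (metis mult.commute)
  qed
  have p1: "(s - t) * indicator {..t} \<xi> \<le> max s \<xi> - max t \<xi>" for \<xi> :: real
    using assms(3,4) by (cases "\<xi> \<le> t") (auto simp: indicator_def max_def)
  have p2: "max s \<xi> - max t \<xi> \<le> (s - t) * indicator {..s} \<xi>" for \<xi> :: real
    using assms(3,4) by (cases "\<xi> \<le> s") (auto simp: indicator_def max_def)
  show "cdf M t * (s - t) \<le> F_norm M (s,1) - F_norm M (t,1)"
    unfolding eq c by (intro integral_mono Ii Id p1)
  show "F_norm M (s,1) - F_norm M (t,1) \<le> cdf M s * (s - t)"
    unfolding eq c by (intro integral_mono Ii Id p2)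
qed

lemma g_lip:
  assumes "real_distribution M" "integrable M (\<lambda>\<xi>. \<xi>)" "0 \<le> t" "0 \<le> s"
  shows "\<bar>F_norm M (s,1) - F_norm M (t,1)\<bar> \<le> \<bar>s - t\<bar>"
proof -
  interpret real_distribution M by fact
  { fix t s :: real
    have "0 \<le> t \<Longrightarrow> t \<le> s \<Longrightarrow> \<bar>F_norm M (s,1) - F_norm M (t,1)\<bar> \<le> \<bar>s - t\<bar>"
    proof -
      assume ts: "0 \<le> t" "t \<le> s"
      have "0 \<le> cdf M t * (s - t)" using ts cdf_nonneg[of t] by simp
      moreover have "cdf M s * (s - t) \<le> s - t"
        using mult_right_mono[OF cdf_bounded_prob[of s], of "s - t"] ts by simp
      ultimately have "0 \<le> F_norm M (s,1) - F_norm M (t,1)" "F_norm M (s,1) - F_norm M (t,1) \<le> s - t"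
        using g_bounds[OF assms(1,2) ts] by linarith+
      then show "\<bar>F_norm M (s,1) - F_norm M (t,1)\<bar> \<le> \<bar>s - t\<bar>" using ts by simp
    qed }
  from this[of t s] this[of s t] show ?thesis using assms(3,4) by linarith
qed

lemma zero_var:
  fixes d F :: "real \<Rightarrow> real" and D :: "real set"
  assumes dense: "\<And>u v. 0 \<le> u \<Longrightarrow> u < v \<Longrightarrow> \<exists>t. u < t \<and> t < v \<and> t \<in> D"
    and Dpos: "D \<subseteq> {0..}"
    and bnd: "\<And>t s. t \<in> D \<Longrightarrow> s \<in> D \<Longrightarrow> t \<le> s \<Longrightarrow> \<bar>d s - d t\<bar> \<le> (F s - F t) * (s - t)"
    and mono: "\<And>t s. t \<le> s \<Longrightarrow> F t \<le> F s"
    and aD: "a \<in> D" and bD: "b \<in> D" and ab: "a \<le> b"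
  shows "d a = d b"
proof -
  have step: "\<forall>a b. a \<in> D \<longrightarrow> b \<in> D \<longrightarrow> a \<le> b \<longrightarrow> b - a \<le> real n * \<delta> / 2 \<longrightarrow>
      \<bar>d b - d a\<bar> \<le> \<delta> * (F b - F a)" if "\<delta> > 0" for n \<delta>
  proof (induction n)
    case 0
    then show ?case by auto
  next
    case (Suc n)
    show ?case
    proof (intro allI impI)
      fix a b assume a: "a \<in> D" and b: "b \<in> D" and ab: "a \<le> b"
        and len: "b - a \<le> real (Suc n) * \<delta> / 2"
      show "\<bar>d b - d a\<bar> \<le> \<delta> * (F b - F a)"
      proof (cases "b - a \<le> \<delta>")
        case True
        have "\<bar>d b - d a\<bar> \<le> (F b - F a) * (b - a)" using bnd a b ab by blast
        also have "\<dots> \<le> (F b - F a) * \<delta>" using True mono[OF ab] by (intro mult_left_mono) auto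
        finally show ?thesis by (simp add: mult.commute)
      next
        case False
        have a0: "0 \<le> a + \<delta>/2" using a Dpos \<open>\<delta>>0\<close> by auto
        obtain c where c: "a + \<delta>/2 < c" "c < a + \<delta>" "c \<in> D"
          using dense[OF a0, of "a + \<delta>"] \<open>\<delta>>0\<close> by auto
        have "b - c \<le> real n * \<delta> / 2" using len c by (simp add: field_simps)
        then have IH: "\<bar>d b - d c\<bar> \<le> \<delta> * (F b - F c)" using Suc.IH c b False by auto
        have "\<bar>d c - d a\<bar> \<le> (F c - F a) * (c - a)" using bnd a c \<open>\<delta>>0\<close> by auto
        also have "\<dots> \<le> (F c - F a) * \<delta>" using c mono[of a c] \<open>\<delta>>0\<close> by (intro mult_left_mono) auto
        finally show ?thesis using IH by (simp add: algebra_simps)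
      qed
    qed
  qed
  have all: "\<bar>d b - d a\<bar> \<le> \<delta> * (F b - F a)" if "\<delta> > 0" for \<delta>
  proof -
    obtain n where "(b - a) / (\<delta>/2) \<le> real n" using real_arch_simple by blast
    then have "b - a \<le> real n * \<delta> / 2" using that by (simp add: field_simps)
    then show ?thesis using step[OF that, of n] aD bD ab by blast
  qed
  show ?thesis
  proof (rule ccontr)
    assume ne: "d a \<noteq> d b"
    define e where "e = \<bar>d b - d a\<bar>"
    define K where "K = F b - F a"
    have e0: "e > 0" using ne e_def by auto
    have K0: "K \<ge> 0" using mono[OF ab] K_def by auto
    have "e \<le> (e / (K + 1)) * K" using all[of "e / (K+1)"] e0 K0 unfolding e_def K_def by auto
    also have "\<dots> < e" using e0 K0 by (simp add: field_simps)
    finally show False by simp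
  qed
qed

lemma dense_AE:
  fixes u v :: real
  assumes "AE t in lborel. 0 < t \<longrightarrow> P t" "0 \<le> u" "u < v"
  shows "\<exists>t. u < t \<and> t < v \<and> 0 < t \<and> P t"
proof (rule ccontr)
  assume H: "\<not> ?thesis"
  from assms(1) obtain Z where Z: "{x \<in> space lborel. \<not> (0 < x \<longrightarrow> P x)} \<subseteq> Z"
    "emeasure lborel Z = 0" "Z \<in> sets lborel" by (auto elim: AE_E)
  have "{u<..<v} \<subseteq> Z"
  proof
    fix x assume x: "x \<in> {u<..<v}"
    have x0: "0 < x" using x assms(2) by simp
    then have "\<not> (0 < x \<longrightarrow> P x)" using H x by auto
    then show "x \<in> Z" using Z(1) by auto
  qed
  then have "emeasure lborel {u<..<v} \<le> emeasure lborel Z" using Z(3) by (intro emeasure_mono) auto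
  then show False using Z(2) assms(3) by simp
qed

lemma norm_hom: "is_norm_R2 N \<Longrightarrow> N (c * a, c * b) = \<bar>c\<bar> * N (a, b)"
  unfolding is_norm_R2_def by blast

lemma norm_tri: "is_norm_R2 N \<Longrightarrow> N (a + a', b + b') \<le> N (a, b) + N (a', b')"
  unfolding is_norm_R2_def by (metis fst_conv snd_conv)

lemma norm_nonneg: "is_norm_R2 N \<Longrightarrow> 0 \<le> N x"
  unfolding is_norm_R2_def by blast

lemma norm_bound:
  assumes "is_norm_R2 N"
  shows "N (a, b) \<le> \<bar>a\<bar> * N (1, 0) + \<bar>b\<bar> * N (0, 1)"
proof -
  have "N (a + 0, 0 + b) \<le> N (a, 0) + N (0, b)" by (rule norm_tri[OF assms])
  moreover have "N (a, 0) = \<bar>a\<bar> * N (1, 0)" using norm_hom[OF assms, of a 1 0] by simp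
  moreover have "N (0, b) = \<bar>b\<bar> * N (0, 1)" using norm_hom[OF assms, of b 0 1] by simp
  ultimately show ?thesis by simp
qed

lemma norm_lip:
  assumes "is_norm_R2 N"
  shows "\<bar>N (a, b) - N (a', b')\<bar> \<le> \<bar>a - a'\<bar> * N (1, 0) + \<bar>b - b'\<bar> * N (0, 1)"
proof -
  have 1: "N (a, b) \<le> N (a - a', b - b') + N (a', b')"
    using norm_tri[OF assms, of "a - a'" "a'" "b - b'" b'] by simp
  have 2: "N (a', b') \<le> N (a' - a, b' - b) + N (a, b)"
    using norm_tri[OF assms, of "a' - a" "a" "b' - b" b] by simp
  have 3: "N (a - a', b - b') \<le> \<bar>a - a'\<bar> * N (1, 0) + \<bar>b - b'\<bar> * N (0, 1)"
    by (rule norm_bound[OF assms])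
  have 4: "N (a' - a, b' - b) \<le> \<bar>a - a'\<bar> * N (1, 0) + \<bar>b - b'\<bar> * N (0, 1)"
    using norm_bound[OF assms, of "a' - a" "b' - b"] by (simp add: abs_minus_commute)
  show ?thesis using 1 2 3 4 by linarith
qed

lemma norm_convex:
  assumes "is_norm_R2 N"
  shows "convex_on UNIV (\<lambda>s. N (s, 1))"
proof (rule convex_onI)
  fix t x y :: real assume t: "0 < t" "t < 1"
  have "N ((1 - t) * x + t * y, (1 - t) * 1 + t * 1) \<le> N ((1 - t) * x, (1 - t) * 1) + N (t * y, t * 1)"
    by (rule norm_tri[OF assms])
  also have "\<dots> = (1 - t) * N (x, 1) + t * N (y, 1)"
    using norm_hom[OF assms, of "1 - t" x 1] norm_hom[OF assms, of t y 1] t by simp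
  finally show "N ((1 - t) *\<^sub>R x + t *\<^sub>R y, 1) \<le> (1 - t) * N (x, 1) + t * N (y, 1)" by simp
qed auto

lemma Fnorm_0:
  assumes "real_distribution M" "AE \<xi> in M. 0 \<le> \<xi>"
  shows "F_norm M (0, 1) = (\<integral>\<xi>. \<xi> \<partial>M)"
proof -
  interpret real_distribution M by fact
  show ?thesis unfolding F_norm_def using assms(2) by (intro integral_cong_AE) auto
qed

lemma key:
  assumes norm: "is_norm_R2 N" and dc: "derivative_condition N M" and t0: "0 \<le> t"
  shows "N (t, 1) = F_norm M (t, 1)"
proof -
  have rd: "real_distribution M" and ae0: "AE \<xi> in M. 0 \<le> \<xi>" and int: "integrable M (\<lambda>\<xi>. \<xi>)"
    and EX: "(\<integral>\<xi>. \<xi> \<partial>M) = N (0, 1)"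
    and der: "AE t in lborel. 0 < t \<longrightarrow> ((\<lambda>s. N (s, 1)) has_real_derivative cdf M t) (at t)"
    using dc unfolding derivative_condition_def by auto
  interpret real_distribution M by fact
  define h where "h = (\<lambda>s. N (s, 1))"
  define g where "g = (\<lambda>s. F_norm M (s, 1))"
  define d where "d = (\<lambda>s. h s - g s)"
  define D where "D = {t. 0 < t \<and> (h has_real_derivative cdf M t) (at t)}"
  have dense: "\<exists>t. u < t \<and> t < v \<and> t \<in> D" if "0 \<le> u" "u < v" for u v
    using dense_AE[OF der that] unfolding D_def h_def by auto
  have Dpos: "D \<subseteq> {0..}" unfolding D_def by auto
  have tang: "h s - h t \<ge> cdf M t * (s - t)" if "t \<in> D" for s t
  proof -
    have "(h has_real_derivative cdf M t) (at t within UNIV)" using that unfolding D_def by auto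
    then show ?thesis
      using convex_on_imp_above_tangent[OF norm_convex[OF norm] connected_UNIV, of t s "cdf M t"]
      unfolding h_def by auto
  qed
  have bnd: "\<bar>d s - d t\<bar> \<le> (cdf M s - cdf M t) * (s - t)" if "t \<in> D" "s \<in> D" "t \<le> s" for t s
  proof -
    have t0: "0 \<le> t" using that Dpos by auto
    have 1: "h s - h t \<ge> cdf M t * (s - t)" using tang[OF that(1)] .
    have 2: "h t - h s \<ge> cdf M s * (t - s)" using tang[OF that(2)] .
    have 3: "cdf M t * (s - t) \<le> g s - g t" "g s - g t \<le> cdf M s * (s - t)"
      using g_bounds[OF rd int t0 that(3)] unfolding g_def by auto
    show ?thesis using 1 2 3 unfolding d_def by (simp add: algebra_simps)
  qed
  have eqD: "d a = d b" if "a \<in> D" "b \<in> D" for a b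
  proof (cases "a \<le> b")
    case True
    then show ?thesis using zero_var[OF dense Dpos bnd cdf_nondecreasing that] by auto
  next
    case False
    then show ?thesis using zero_var[OF dense Dpos bnd cdf_nondecreasing that(2,1)] by auto
  qed
  obtain a0 where a0: "a0 \<in> D" using dense[of 0 1] by auto
  have L0: "0 \<le> N (1, 0)" using norm_nonneg[OF norm] .
  have lip: "\<bar>d u - d t\<bar> \<le> (N (1, 0) + 1) * \<bar>u - t\<bar>" if "0 \<le> u" "0 \<le> t" for u t
  proof -
    have "\<bar>h u - h t\<bar> \<le> \<bar>u - t\<bar> * N (1, 0)" using norm_lip[OF norm, of u 1 t 1] unfolding h_def by simp
    moreover have "\<bar>g u - g t\<bar> \<le> \<bar>u - t\<bar>" using g_lip[OF rd int that(2,1)] unfolding g_def by simp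
    ultimately show ?thesis unfolding d_def by (simp add: algebra_simps)
  qed
  have const: "d t = d a0" if tt: "0 \<le> t" for t
  proof (rule ccontr)
    assume ne: "d t \<noteq> d a0"
    define e where "e = \<bar>d t - d a0\<bar>"
    have e0: "e > 0" using ne e_def by auto
    obtain u where u: "t < u" "u < t + e / (2 * (N (1, 0) + 1))" "u \<in> D"
      using dense[OF tt, of "t + e / (2 * (N (1, 0) + 1))"] e0 L0 by auto
    have "\<bar>d u - d t\<bar> \<le> (N (1, 0) + 1) * \<bar>u - t\<bar>" using lip[of u t] u that by auto
    also have "\<dots> \<le> (N (1, 0) + 1) * (e / (2 * (N (1, 0) + 1)))"
      using u L0 by (intro mult_left_mono) auto
    also have "\<dots> = e / 2" using L0 by (simp add: field_simps)
    finally have "\<bar>d u - d t\<bar> \<le> e / 2" .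
    moreover have "d u = d a0" using eqD[OF u(3) a0] .
    ultimately have "\<bar>d a0 - d t\<bar> \<le> e / 2" by simp
    moreover have "\<bar>d a0 - d t\<bar> = e" unfolding e_def by (simp add: abs_minus_commute)
    ultimately show False using e0 by linarith
  qed
  have d0: "d 0 = 0" unfolding d_def h_def g_def using Fnorm_0[OF rd ae0] EX by simp
  show ?thesis using const[OF t0] const[of 0] d0 unfolding d_def h_def g_def by simp
qed

lemma N10:
  assumes norm: "is_norm_R2 N" and dc: "derivative_condition N M"
  shows "N (1, 0) = 1"
proof -
  have rd: "real_distribution M" and ae0: "AE \<xi> in M. 0 \<le> \<xi>" and int: "integrable M (\<lambda>\<xi>. \<xi>)"
    and EX: "(\<integral>\<xi>. \<xi> \<partial>M) = N (0, 1)"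
    using dc unfolding derivative_condition_def by auto
  interpret real_distribution M by fact
  define C where "C = N (0, 1)"
  have C0: "0 \<le> C" unfolding C_def using norm_nonneg[OF norm] .
  have bound: "\<bar>N (1, 0) - 1\<bar> \<le> 2 * C / t" if t: "0 < t" for t
  proof -
    have I: "\<And>a. integrable M (\<lambda>\<xi>. max a \<xi>)" using g_integrable[OF rd int, of _ 1] by simp
    have gl: "t \<le> F_norm M (t, 1)"
    proof -
      have "(\<integral>\<xi>. t \<partial>M) \<le> (\<integral>\<xi>. max t \<xi> \<partial>M)" by (intro integral_mono I) auto
      then show ?thesis using t prob_space unfolding F_norm_def by simp
    qed
    have gu: "F_norm M (t, 1) \<le> t + C"
    proof -
      have "(\<integral>\<xi>. max t \<xi> \<partial>M) \<le> (\<integral>\<xi>. t + \<xi> \<partial>M)"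
        using ae0 t by (intro integral_mono_AE I Bochner_Integration.integrable_add int) auto
      also have "\<dots> = t + C" using int EX C_def prob_space by (simp add: Bochner_Integration.integral_add)
      finally show ?thesis using t unfolding F_norm_def by simp
    qed
    have k: "N (t, 1) = F_norm M (t, 1)" using key[OF norm dc] t by simp
    have hom: "N (t, 1) = t * N (1, 1 / t)" using norm_hom[OF norm, of t 1 "1/t"] t by simp
    have lp: "\<bar>N (1, 1 / t) - N (1, 0)\<bar> \<le> C / t"
      using norm_lip[OF norm, of 1 "1/t" 1 0] t unfolding C_def by simp
    have "1 \<le> N (1, 1 / t)" "N (1, 1/t) \<le> 1 + C / t"
    proof -
      have "t * 1 \<le> t * N (1, 1 / t)" using gl k hom by simp
      then show "1 \<le> N (1, 1 / t)" using t by (simp only: mult_le_cancel_left_pos)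
      have "t * N (1, 1/t) \<le> t + C" using gu k hom by simp
      also have "t + C = t * (1 + C / t)" using t by (simp add: field_simps)
      finally have "t * N (1, 1/t) \<le> t * (1 + C / t)" .
      then show "N (1, 1/t) \<le> 1 + C / t" using t by (simp only: mult_le_cancel_left_pos)
    qed
    then show ?thesis using lp C0 t by (simp add: abs_le_iff)
  qed
  show ?thesis
  proof (rule ccontr)
    assume ne: "N (1, 0) \<noteq> 1"
    define e where "e = \<bar>N (1, 0) - 1\<bar>"
    have e0: "0 < e" using ne e_def by auto
    define t where "t = 4 * (C + 1) / e"
    have t0: "0 < t" using e0 C0 t_def by auto
    have "e \<le> 2 * C / t" using bound[OF t0] e_def by simp
    also have "\<dots> = e * C / (2 * (C + 1))" using e0 C0 unfolding t_def by (simp add: field_simps)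
    also have "\<dots> < e"
    proof -
      have "0 \<le> C * e" using e0 C0 by simp
      then have "0 < C * e + e * 2" using e0 by linarith
      then show ?thesis using e0 C0 by (simp add: field_simps)
    qed
    finally show False by simp
  qed
qed

lemma repr:
  assumes norm: "is_norm_R2 N" and rs: "radially_symmetric N" and dc: "derivative_condition N M"
  shows "N = F_norm M"
proof
  fix x :: "real \<times> real"
  obtain a b where x: "x = (a, b)" by (cases x)
  have rd: "real_distribution M" using dc unfolding derivative_condition_def by auto
  interpret real_distribution M by fact
  show "N x = F_norm M x"
  proof (cases "b = 0")
    case True
    have "N (a, 0) = \<bar>a\<bar> * N (1, 0)" using norm_hom[OF norm, of a 1 0] by simp
    then show ?thesis using N10[OF norm dc] True x prob_space unfolding F_norm_def by simp
  next
    case False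
    have b0: "0 < \<bar>b\<bar>" using False by simp
    have "N (a, b) = N (\<bar>a\<bar>, \<bar>b\<bar>)" using rs unfolding radially_symmetric_def by blast
    also have "\<dots> = N (\<bar>b\<bar> * (\<bar>a\<bar> / \<bar>b\<bar>), \<bar>b\<bar> * 1)" using b0 by simp
    also have "\<dots> = \<bar>b\<bar> * N (\<bar>a\<bar> / \<bar>b\<bar>, 1)" using norm_hom[OF norm, of "\<bar>b\<bar>" "\<bar>a\<bar> / \<bar>b\<bar>" 1] by simp
    also have "\<dots> = \<bar>b\<bar> * F_norm M (\<bar>a\<bar> / \<bar>b\<bar>, 1)" using key[OF norm dc, of "\<bar>a\<bar> / \<bar>b\<bar>"] by simp
    also have "\<dots> = (\<integral>\<xi>. \<bar>b\<bar> * max (\<bar>a\<bar> / \<bar>b\<bar>) \<xi> \<partial>M)" unfolding F_norm_def by simp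
    also have "\<dots> = (\<integral>\<xi>. max \<bar>a\<bar> (\<bar>b\<bar> * \<xi>) \<partial>M)"
    proof (rule Bochner_Integration.integral_cong[OF refl])
      fix \<xi> :: real
      show "\<bar>b\<bar> * max (\<bar>a\<bar> / \<bar>b\<bar>) \<xi> = max \<bar>a\<bar> (\<bar>b\<bar> * \<xi>)"
        using b0 by (auto simp: max_def field_simps)
    qed
    finally show ?thesis using x unfolding F_norm_def by simp
  qed
qed

lemma Fnorm_deriv:
  assumes rd: "real_distribution M" and int: "integrable M (\<lambda>\<xi>. \<xi>)" and t0: "0 < t"
    and at: "measure M {t} = 0"
  shows "((\<lambda>s. F_norm M (s, 1)) has_real_derivative cdf M t) (at t)"
proof -
  interpret real_distribution M by fact
  define g where "g = (\<lambda>s. F_norm M (s, 1))"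
  have q: "min (cdf M x) (cdf M t) \<le> (g x - g t) / (x - t) \<and> (g x - g t) / (x - t) \<le> max (cdf M x) (cdf M t)"
    if "0 < x" "x \<noteq> t" for x
  proof (cases "x < t")
    case True
    have "cdf M x * (t - x) \<le> g t - g x" "g t - g x \<le> cdf M t * (t - x)"
      using g_bounds[OF rd int, of x t] True that unfolding g_def by auto
    moreover have "(g x - g t) / (x - t) = (g t - g x) / (t - x)"
      by (metis minus_diff_eq minus_divide_divide)
    ultimately have "cdf M x \<le> (g x - g t) / (x - t)" "(g x - g t) / (x - t) \<le> cdf M t"
      using True by (auto simp: pos_le_divide_eq pos_divide_le_eq)
    then show ?thesis by (simp add: min_le_iff_disj le_max_iff_disj)
  next
    case False
    then have tx: "t < x" using that by auto
    have "cdf M t * (x - t) \<le> g x - g t" "g x - g t \<le> cdf M x * (x - t)"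
      using g_bounds[OF rd int, of t x] tx t0 unfolding g_def by auto
    then have "cdf M t \<le> (g x - g t) / (x - t)" "(g x - g t) / (x - t) \<le> cdf M x"
      using tx by (auto simp: pos_le_divide_eq pos_divide_le_eq)
    then show ?thesis by (simp add: min_le_iff_disj le_max_iff_disj)
  qed
  have ev: "eventually (\<lambda>x. 0 < x \<and> x \<noteq> t) (at t)"
    unfolding eventually_at using t0 by (intro exI[of _ t]) (auto simp: dist_real_def)
  have c: "isCont (cdf M) t" using isCont_cdf at by simp
  then have c': "(cdf M \<longlongrightarrow> cdf M t) (at t)" by (simp add: isCont_def)
  have l1: "((\<lambda>x. min (cdf M x) (cdf M t)) \<longlongrightarrow> cdf M t) (at t)"
    using tendsto_min[OF c' tendsto_const[of "cdf M t"]] by simp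
  have l2: "((\<lambda>x. max (cdf M x) (cdf M t)) \<longlongrightarrow> cdf M t) (at t)"
    using tendsto_max[OF c' tendsto_const[of "cdf M t"]] by simp
  have "((\<lambda>x. (g x - g t) / (x - t)) \<longlongrightarrow> cdf M t) (at t)"
    by (rule tendsto_sandwich[OF eventually_mono[OF ev] eventually_mono[OF ev] l1 l2]) (use q in auto)
  then show ?thesis unfolding g_def by (simp add: has_field_derivative_iff)
qed

lemma forward:
  assumes adm: "admissible_law M"
  shows "radially_symmetric (F_norm M) \<and> derivative_condition (F_norm M) M"
proof -
  have rd: "real_distribution M" and ae0: "AE \<xi> in M. 0 \<le> \<xi>" and int: "integrable M (\<lambda>\<xi>. \<xi>)"
    using adm unfolding admissible_law_def by auto
  interpret real_distribution M by fact
  have rs: "radially_symmetric (F_norm M)" unfolding radially_symmetric_def F_norm_def by simp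
  have cnt: "countable {x. measure M {x} \<noteq> 0}" by (rule countable_support)
  have "AE t in lborel. 0 < t \<longrightarrow> ((\<lambda>s. F_norm M (s, 1)) has_real_derivative cdf M t) (at t)"
  proof -
    have "AE t in lborel. t \<notin> {x. measure M {x} \<noteq> 0}"
      by (rule AE_not_in[OF countable_imp_null_set_lborel[OF cnt]])
    then show ?thesis by eventually_elim (auto intro: Fnorm_deriv[OF rd int])
  qed
  then show ?thesis using rs rd ae0 int Fnorm_0[OF rd ae0] unfolding derivative_condition_def by auto
qed

theorem corollary2p10:
  fixes N :: "real \<times> real \<Rightarrow> real"
  assumes "is_norm_R2 N"
  shows "(is_F_norm N \<longleftrightarrow>
           radially_symmetric N \<and> (\<exists>M. derivative_condition N M))
         \<and> (\<forall>M. radially_symmetric N \<and> derivative_condition N M \<longrightarrow> N = F_norm M)"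
proof (rule conjI)
  show "is_F_norm N \<longleftrightarrow> radially_symmetric N \<and> (\<exists>M. derivative_condition N M)"
  proof
  assume "is_F_norm N"
  then obtain M where "admissible_law M" "N = F_norm M" unfolding is_F_norm_def by auto
  then show "radially_symmetric N \<and> (\<exists>M. derivative_condition N M)" using forward by blast
next
  assume H: "radially_symmetric N \<and> (\<exists>M. derivative_condition N M)"
  then obtain M where dc: "derivative_condition N M" by auto
  have eq: "N = F_norm M" using repr[OF assms _ dc] H by auto
  have "N (0, 1) \<noteq> 0" using assms unfolding is_norm_R2_def by auto
  moreover have "0 \<le> N (0, 1)" using norm_nonneg[OF assms] .
  ultimately have "0 < N (0, 1)" by linarith
  then have "admissible_law M" using dc unfolding admissible_law_def derivative_condition_def by auto
  then show "is_F_norm N" unfolding is_F_norm_def using eq by auto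
  qed
next
  show "\<forall>M. radially_symmetric N \<and> derivative_condition N M \<longrightarrow> N = F_norm M"
  proof (intro allI impI)
  fix M assume "radially_symmetric N \<and> derivative_condition N M"
  then show "N = F_norm M" using repr[OF assms] by auto
  qed
qed

end
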